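(* Let $a,b>0$ and $\alpha\in\,]0,\pi/2]$ satisfy $2b\cos\alpha\leq a\leq b$, and let $p$ be any point of the flat torus $T_{a,b,\alpha}$. Then: <ul> <li>if $\alpha=\pi/2$, we have $\#F_p=\#F_p^4=1$;</li> <li>if $\alpha<\pi/2$, we have $\#F_p=\#F_p^3=2$.</li> </ul>
   Context: For $a,b>0$ and $\alpha\in\,]0,\pi/2]$, $T_{a,b,\alpha}$ is the flat torus $\mathbb{R}^2/\Lambda$, where $\Lambda$ is the group of translations generated by $(a,0)$ and $(b\cos\alpha,b\sin\alpha)$. Equivalently, it is the parallelogram with sides $a,b$ and angle $\alpha$ with opposite sides identified by translation. It carries the induced intrinsic (quotient) distance $d$. For a point $p$, $F_p$ is the set of farthest points from $p$, i.e. the points $q$ with $d(p,q)=\max_x d(p,x)$. A segment is a shortest path. $F_p^n$ is the set of those farthest points from $p$ that are joined to $p$ by exactly $n$ distinct segments. $\#S$ is the cardinality of a set $S$. *)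

theory Defs
  imports "HOL-Analysis.Analysis"
begin

definition tlattice :: "real \<Rightarrow> real \<Rightarrow> real \<Rightarrow> complex set" where
  "tlattice a b \<alpha> =
     {of_int m * complex_of_real a + of_int n * (complex_of_real b * cis \<alpha>) | m n. True}"

definition tpoint :: "real \<Rightarrow> real \<Rightarrow> real \<Rightarrow> complex \<Rightarrow> complex set" where
  "tpoint a b \<alpha> x = (\<lambda>l. x + l) ` tlattice a b \<alpha>"

definition torus :: "real \<Rightarrow> real \<Rightarrow> real \<Rightarrow> complex set set" where
  "torus a b \<alpha> = range (tpoint a b \<alpha>)"

definition tdist :: "complex set \<Rightarrow> complex set \<Rightarrow> real" where
  "tdist A B = Inf {cmod (x - y) | x y. x \<in> A \<and> y \<in> B}"

definition farthest :: "real \<Rightarrow> real \<Rightarrow> real \<Rightarrow> complex set \<Rightarrow> complex set set" where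
  "farthest a b \<alpha> P =
     {Q \<in> torus a b \<alpha>. \<forall>X \<in> torus a b \<alpha>. tdist P X \<le> tdist P Q}"

definition segments :: "real \<Rightarrow> real \<Rightarrow> real \<Rightarrow> complex set \<Rightarrow> complex set
     \<Rightarrow> (real \<Rightarrow> complex set) set" where
  "segments a b \<alpha> P Q =
     {\<gamma>. \<gamma> 0 = P \<and> \<gamma> (tdist P Q) = Q
        \<and> (\<forall>t \<in> {0..tdist P Q}. \<gamma> t \<in> torus a b \<alpha>)
        \<and> (\<forall>s \<in> {0..tdist P Q}. \<forall>t \<in> {0..tdist P Q}. tdist (\<gamma> s) (\<gamma> t) = \<bar>s - t\<bar>)
        \<and> (\<forall>t. t \<notin> {0..tdist P Q} \<longrightarrow> \<gamma> t = {})}"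

definition farthest_n :: "real \<Rightarrow> real \<Rightarrow> real \<Rightarrow> nat \<Rightarrow> complex set \<Rightarrow> complex set set" where
  "farthest_n a b \<alpha> n P = {Q \<in> farthest a b \<alpha> P. card (segments a b \<alpha> P Q) = n}"

end

theory Submission
  imports Defs
begin

locale tor =
  fixes a b \<alpha> :: real
  assumes a0: "a > 0" and b0: "b > 0" and al0: "0 < \<alpha>" and al1: "\<alpha> \<le> pi/2"
    and cond1: "2*b*cos \<alpha> \<le> a" and cond2: "a \<le> b"
begin

abbreviation "L \<equiv> tlattice a b \<alpha>"
abbreviation "tp \<equiv> tpoint a b \<alpha>"
abbreviation "TT \<equiv> torus a b \<alpha>"
definition "uu = complex_of_real a"
definition "vv = complex_of_real b * cis \<alpha>"
definition "pp = b * cos \<alpha>"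
definition "hh = b * sin \<alpha>"
definition "eps = min a hh"

lemma hh_pos: "hh > 0"
  unfolding hh_def using b0 al0 al1 by (intro mult_pos_pos sin_gt_zero) auto

lemma pp_ge: "pp \<ge> 0"
  unfolding pp_def using b0 al0 al1 by (intro mult_nonneg_nonneg cos_ge_zero) auto

lemma eps_pos: "eps > 0" using a0 hh_pos by (simp add: eps_def)

lemma Re_uu[simp]: "Re uu = a" and Im_uu[simp]: "Im uu = 0"
  and Re_vv[simp]: "Re vv = pp" and Im_vv[simp]: "Im vv = hh"
  by (simp_all add: uu_def vv_def pp_def hh_def)

lemma L_iff: "l \<in> L \<longleftrightarrow> (\<exists>m n::int. l = of_int m * uu + of_int n * vv)"
  by (auto simp: tlattice_def uu_def vv_def)

lemma L_0[simp]: "0 \<in> L" unfolding L_iff by (rule exI[of _ 0], rule exI[of _ 0]) simp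
lemma L_uu[simp]: "uu \<in> L" unfolding L_iff by (rule exI[of _ 1], rule exI[of _ 0]) simp
lemma L_vv[simp]: "vv \<in> L" unfolding L_iff by (rule exI[of _ 0], rule exI[of _ 1]) simp

lemma L_add[intro]: "l1 \<in> L \<Longrightarrow> l2 \<in> L \<Longrightarrow> l1 + l2 \<in> L"
proof -
  assume "l1 \<in> L" "l2 \<in> L"
  then obtain m1 n1 m2 n2 :: int where "l1 = of_int m1 * uu + of_int n1 * vv" "l2 = of_int m2 * uu + of_int n2 * vv"
    unfolding L_iff by blast
  then show ?thesis unfolding L_iff
    by (intro exI[of _ "m1+m2"] exI[of _ "n1+n2"]) (simp add: algebra_simps)
qed

lemma L_uminus[intro]: "l \<in> L \<Longrightarrow> - l \<in> L"
proof -
  assume "l \<in> L"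
  then obtain m n :: int where "l = of_int m * uu + of_int n * vv"
    unfolding L_iff by blast
  then show ?thesis unfolding L_iff
    by (intro exI[of _ "-m"] exI[of _ "-n"]) (simp add: algebra_simps)
qed

lemma L_diff[intro]: "l1 \<in> L \<Longrightarrow> l2 \<in> L \<Longrightarrow> l1 - l2 \<in> L"
  using L_add[of l1 "-l2"] L_uminus[of l2] by simp

lemma tp_mem: "y \<in> tp x \<longleftrightarrow> y - x \<in> L"
proof
  assume "y \<in> tp x" then show "y - x \<in> L" unfolding tpoint_def by auto
next
  assume "y - x \<in> L" then have "x + (y - x) \<in> tp x" unfolding tpoint_def by blast
  then show "y \<in> tp x" by simp
qed

lemma tp_self[simp]: "x \<in> tp x" using tp_mem by simp

lemma tp_eq: "tp x = tp y \<longleftrightarrow> x - y \<in> L"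
proof
  assume "tp x = tp y" then have "x \<in> tp y" using tp_self by blast
  then show "x - y \<in> L" using tp_mem by blast
next
  assume h: "x - y \<in> L"
  show "tp x = tp y"
  proof (intro set_eqI iffI)
    fix z assume "z \<in> tp x" then have "z - x \<in> L" using tp_mem by blast
    then have "(z - x) + (x - y) \<in> L" using h by blast
    then show "z \<in> tp y" using tp_mem by simp
  next
    fix z assume "z \<in> tp y" then have "z - y \<in> L" using tp_mem by blast
    then have "(z - y) - (x - y) \<in> L" using h by blast
    then show "z \<in> tp x" using tp_mem by simp
  qed
qed

lemma tp_of_mem: "y \<in> tp x \<Longrightarrow> tp y = tp x"
  by (subst tp_eq) (simp add: tp_mem)

lemma TT_iff: "A \<in> TT \<longleftrightarrow> (\<exists>x. A = tp x)"
  unfolding torus_def by auto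

lemma TT_tp[simp]: "tp x \<in> TT" unfolding TT_iff by blast

lemma TT_of_mem: "A \<in> TT \<Longrightarrow> z \<in> A \<Longrightarrow> A = tp z"
proof -
  assume "A \<in> TT" "z \<in> A"
  then obtain x where "A = tp x" using TT_iff by blast
  then show ?thesis using tp_of_mem \<open>z \<in> A\<close> by simp
qed

lemma L_norm: assumes "l \<in> L" "l \<noteq> 0" shows "cmod l \<ge> eps"
proof -
  obtain m n :: int where l: "l = of_int m * uu + of_int n * vv"
    using assms unfolding L_iff by blast
  show ?thesis
  proof (cases "n = 0")
    case True
    then have "m \<noteq> 0" using assms l by auto
    then have "\<bar>real_of_int m\<bar> \<ge> 1" by linarith
    then have "\<bar>real_of_int m\<bar> * a \<ge> 1 * a" using a0 by (intro mult_right_mono) auto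
    moreover have "cmod l = \<bar>real_of_int m\<bar> * a" using True l a0
      by (simp add: uu_def norm_mult)
    ultimately have "cmod l \<ge> a" by linarith
    then show ?thesis unfolding eps_def by linarith
  next
    case False
    then have "\<bar>real_of_int n\<bar> \<ge> 1" by linarith
    then have "\<bar>real_of_int n\<bar> * hh \<ge> 1 * hh" using hh_pos by (intro mult_right_mono) auto
    moreover have "\<bar>Im l\<bar> = \<bar>real_of_int n\<bar> * hh" using l hh_pos by (simp add: abs_mult)
    moreover have "\<bar>Im l\<bar> \<le> cmod l" by (rule abs_Im_le_cmod)
    ultimately have "cmod l \<ge> hh" by linarith
    then show ?thesis unfolding eps_def by linarith
  qed
qed

lemma coset_sep: assumes "y1 \<in> tp x" "y2 \<in> tp x" "cmod (y1 - y2) < eps" shows "y1 = y2"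
proof (rule ccontr)
  assume ne: "y1 \<noteq> y2"
  have "(y1 - x) - (y2 - x) \<in> L" using assms tp_mem by blast
  then have "y1 - y2 \<in> L" by simp
  then have "cmod (y1 - y2) \<ge> eps" using L_norm ne by simp
  then show False using assms by simp
qed

lemma closed_tp: "closed (tp x)"
  by (rule discrete_imp_closed[OF eps_pos]) (auto simp: dist_norm intro: coset_sep)

lemma tdist_lower: "x' \<in> A \<Longrightarrow> y' \<in> B \<Longrightarrow> tdist A B \<le> cmod (x' - y')"
  unfolding tdist_def by (rule cInf_lower) (auto intro: bdd_belowI[of _ 0])

lemma tdist_attain: assumes "A \<in> TT" "B \<in> TT" "z \<in> A"
  shows "\<exists>w\<in>B. cmod (z - w) = tdist A B"
proof -
  obtain y where B: "B = tp y" using assms TT_iff by blast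
  have A: "A = tp z" using assms TT_of_mem by blast
  obtain w where w: "w \<in> B" "\<And>w'. w' \<in> B \<Longrightarrow> dist z w \<le> dist z w'"
    using distance_attains_inf[OF closed_tp, of y z] B tp_self by blast
  have "tdist A B = cmod (z - w)"
    unfolding tdist_def
  proof (rule cInf_eq_minimum)
    show "cmod (z - w) \<in> {cmod (x - y) |x y. x \<in> A \<and> y \<in> B}" using w assms by blast
  next
    fix r assume "r \<in> {cmod (x - y) |x y. x \<in> A \<and> y \<in> B}"
    then obtain x' y' where r: "r = cmod (x' - y')" "x' \<in> A" "y' \<in> B" by blast
    have "x' - z \<in> L" using r A tp_mem by blast
    have "y' - y \<in> L" using r B tp_mem by blast
    then have "(y' - y) - (x' - z) \<in> L" using \<open>x' - z \<in> L\<close> by blast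
    then have "y' + (z - x') \<in> B" using B tp_mem by (simp add: algebra_simps)
    then have "dist z w \<le> dist z (y' + (z - x'))" using w by blast
    then show "cmod (z - w) \<le> r" using r by (simp add: dist_norm algebra_simps)
  qed
  then show ?thesis using w by auto
qed

lemma tdist_nonneg: "A \<in> TT \<Longrightarrow> B \<in> TT \<Longrightarrow> tdist A B \<ge> 0"
  using tdist_attain TT_iff tp_self by (metis norm_ge_zero)

lemma tdist_sym_sub: "{cmod (x - y) |x y. x \<in> A \<and> y \<in> B} \<subseteq> {cmod (x - y) |x y. x \<in> B \<and> y \<in> A}"
proof
  fix r assume "r \<in> {cmod (x - y) |x y. x \<in> A \<and> y \<in> B}"
  then obtain x y where "r = cmod (x - y)" "x \<in> A" "y \<in> B" by blast
  moreover then have "r = cmod (y - x)" by (simp add: norm_minus_commute)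
  ultimately show "r \<in> {cmod (x - y) |x y. x \<in> B \<and> y \<in> A}" by blast
qed

lemma tdist_sym: "tdist A B = tdist B A"
proof -
  have "{cmod (x - y) |x y. x \<in> A \<and> y \<in> B} = {cmod (x - y) |x y. x \<in> B \<and> y \<in> A}"
    using tdist_sym_sub[of A B] tdist_sym_sub[of B A] by blast
  then show ?thesis unfolding tdist_def by simp
qed

lemma tdist_tri: assumes "A \<in> TT" "B \<in> TT" "C \<in> TT"
  shows "tdist A C \<le> tdist A B + tdist B C"
proof -
  obtain x where x: "x \<in> A" using assms TT_iff tp_self by blast
  obtain y where y: "y \<in> B" "cmod (x - y) = tdist A B" using tdist_attain assms x by blast
  obtain z where z: "z \<in> C" "cmod (y - z) = tdist B C" using tdist_attain assms y by blast
  have "tdist A C \<le> cmod (x - z)" using tdist_lower x z by blast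
  also have "\<dots> \<le> cmod (x - y) + cmod (y - z)" using norm_triangle_ineq[of "x-y" "y-z"] by simp
  finally show ?thesis using y z by simp
qed

end

context tor begin

definition "kk = (b^2 - a*pp)/(2*hh)"
definition "Oc = Complex (a/2) kk"
definition "RR = sqrt (a^2/4 + kk^2)"
definition "Od = uu + vv - Oc"

lemma bsq: "pp^2 + hh^2 = b^2"
proof -
  have "pp^2 + hh^2 = b^2 * (cos \<alpha>)^2 + b^2 * (sin \<alpha>)^2"
    by (simp add: pp_def hh_def power_mult_distrib)
  also have "\<dots> = b^2 * ((sin \<alpha>)^2 + (cos \<alpha>)^2)" by (simp only: distrib_left add.commute)
  also have "\<dots> = b^2" by (simp only: sin_cos_squared_add mult_1_right)
  finally show ?thesis .
qed

lemma rel: "2*hh*kk = pp^2 + hh^2 - a*pp"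
  using hh_pos bsq by (simp add: kk_def)

lemma pp_le: "2*pp \<le> a" using cond1 by (simp add: pp_def)

lemma RR_sq: "RR^2 = a^2/4 + kk^2"
  unfolding RR_def by (simp add: add_nonneg_nonneg)

lemma RR_pos: "RR > 0"
  unfolding RR_def using a0 by (intro real_sqrt_gt_zero add_pos_nonneg) auto

lemma Re_Oc[simp]: "Re Oc = a/2" and Im_Oc[simp]: "Im Oc = kk"
  by (simp_all add: Oc_def)

definition "GG (m::int) (n::int) = a^2 * (m*(m-1)) + b^2 * (n*(n-1)) + 2*a*pp*(m*n)"

lemma g_formula:
  "(cmod (Oc - (of_int m * uu + of_int n * vv)))^2 = RR^2 + GG m n"
proof -
  have "(cmod (Oc - (of_int m * uu + of_int n * vv)))^2
      = (a/2 - (of_int m * a + of_int n * pp))^2 + (kk - of_int n * hh)^2"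
    by (simp add: cmod_power2)
  also have "\<dots> = a^2/4 + kk^2 + ((of_int m * a + of_int n * pp)^2 - a*(of_int m * a + of_int n * pp)
       + (of_int n)^2 * hh^2 - of_int n * (2*hh*kk))"
    by (simp add: power2_eq_square algebra_simps)
  also have "\<dots> = a^2/4 + kk^2 + ((of_int m * a + of_int n * pp)^2 - a*(of_int m * a + of_int n * pp)
       + (of_int n)^2 * hh^2 - of_int n * (pp^2 + hh^2 - a*pp))"
    by (simp only: rel)
  also have "\<dots> = a^2/4 + kk^2 + GG m n"
    unfolding GG_def bsq[symmetric] by (simp add: power2_eq_square algebra_simps)
  finally show ?thesis using RR_sq by simp
qed

lemma int_mm1: "(m::int) * (m - 1) \<ge> 0"
  by (cases "m \<le> 0") (auto intro: mult_nonpos_nonpos)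

lemma Q_pos: "(m::int) * n < 0 \<Longrightarrow> m^2 + n^2 + m*n - m - n \<ge> 1"
proof -
  assume h: "m * n < 0"
  have "(m+n)*(m+n-1) \<ge> 0" by (rule int_mm1)
  then show ?thesis using h by (simp add: power2_eq_square algebra_simps)
qed

lemma GG_nonneg: "GG m n \<ge> 0 \<and> (GG m n = 0 \<longrightarrow> ((m,n) = (0,0) \<or> (m,n) = (1,0) \<or> (m,n) = (0,1) \<or> (pp = 0 \<and> (m,n) = (1,1))))"
proof (cases "m * n \<ge> 0")
  case True
  have m1: "real_of_int (m*(m-1)) \<ge> 0" using int_mm1[of m] by linarith
  have n1: "real_of_int (n*(n-1)) \<ge> 0" using int_mm1[of n] by linarith
  have mn: "real_of_int (m*n) \<ge> 0" using True by linarith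
  have t1: "a^2 * (m*(m-1)) \<ge> 0" using m1 by simp
  have t2: "b^2 * (n*(n-1)) \<ge> 0" using n1 by simp
  have t3: "2*a*pp*(m*n) \<ge> 0" using mn a0 pp_ge by simp
  have ge: "GG m n \<ge> 0" unfolding GG_def using t1 t2 t3 by linarith
  moreover have "GG m n = 0 \<longrightarrow> ((m,n) = (0,0) \<or> (m,n) = (1,0) \<or> (m,n) = (0,1) \<or> (pp = 0 \<and> (m,n) = (1,1)))"
  proof
    assume "GG m n = 0"
    then have z1: "a^2 * (m*(m-1)) = 0" and z2: "b^2 * (n*(n-1)) = 0" and z3: "2*a*pp*(m*n) = 0"
      unfolding GG_def using t1 t2 t3 by linarith+
    from z1 a0 have "m*(m-1) = 0" by simp
    then have m01: "m = 0 \<or> m = 1" by auto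
    from z2 b0 have "n*(n-1) = 0" by simp
    then have n01: "n = 0 \<or> n = 1" by auto
    from z3 a0 have "pp = 0 \<or> m*n = 0" by simp
    then show "((m,n) = (0,0) \<or> (m,n) = (1,0) \<or> (m,n) = (0,1) \<or> (pp = 0 \<and> (m,n) = (1,1)))"
      using m01 n01 by auto
  qed
  ultimately show ?thesis by blast
next
  case False
  then have mn: "m * n < 0" by simp
  have Q: "real_of_int (m^2 + n^2 + m*n - m - n) \<ge> 1" using Q_pos[OF mn] by linarith
  have n1: "real_of_int (n*(n-1)) \<ge> 0" using int_mm1[of n] by linarith
  have mnr: "real_of_int (m*n) \<le> 0" using mn by linarith
  have "a^2 \<le> b^2" using a0 cond2 by (intro power_mono) auto
  then have s1: "b^2 * (n*(n-1)) \<ge> a^2 * (n*(n-1))" using n1 by (intro mult_right_mono) auto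
  have "a * (2*pp) \<le> a * a" using pp_le a0 by (intro mult_left_mono) auto
  then have s2: "(a*(2*pp)) * (m*n) \<ge> (a*a) * (m*n)" using mnr by (intro mult_right_mono_neg) auto
  have "GG m n \<ge> a^2 * (m*(m-1)) + a^2 * (n*(n-1)) + a*a*(m*n)"
    unfolding GG_def using s1 s2 by (simp add: algebra_simps)
  also have "a^2 * (m*(m-1)) + a^2 * (n*(n-1)) + a*a*(m*n) = a^2 * real_of_int (m^2 + n^2 + m*n - m - n)"
    by (simp add: power2_eq_square algebra_simps)
  also have "\<dots> \<ge> a^2 * 1" using Q by (intro mult_left_mono) auto
  finally have "GG m n \<ge> a^2" by simp
  moreover have "a^2 > 0" using a0 by simp
  ultimately have "GG m n > 0" by linarith
  then show ?thesis by simp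
qed

end

context tor begin

definition "VV = (if pp = 0 then {0, uu, vv, uu + vv} else {0, uu, vv})"

lemma Oc_ge: assumes "l \<in> L" shows "cmod (Oc - l) \<ge> RR"
proof -
  obtain m n :: int where l: "l = of_int m * uu + of_int n * vv" using assms L_iff by blast
  have "(cmod (Oc - l))^2 \<ge> RR^2" using g_formula[of m n] GG_nonneg[of m n] l by simp
  then show ?thesis using power2_le_imp_le by (metis norm_ge_zero)
qed

lemma Oc_eq: assumes "l \<in> L" shows "cmod (Oc - l) = RR \<longleftrightarrow> l \<in> VV"
proof -
  obtain m n :: int where l: "l = of_int m * uu + of_int n * vv" using assms L_iff by blast
  have "cmod (Oc - l) = RR \<longleftrightarrow> (cmod (Oc - l))^2 = RR^2"
    using RR_pos by (metis norm_ge_zero power2_eq_iff_nonneg less_imp_le)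
  also have "\<dots> \<longleftrightarrow> GG m n = 0" using g_formula[of m n] l by simp
  also have "\<dots> \<longleftrightarrow> l \<in> VV"
  proof
    assume "GG m n = 0"
    then have "(m,n) = (0,0) \<or> (m,n) = (1,0) \<or> (m,n) = (0,1) \<or> (pp = 0 \<and> (m,n) = (1,1))"
      using GG_nonneg by blast
    then show "l \<in> VV" unfolding VV_def l by auto
  next
    assume "l \<in> VV"
    then have "l = 0 \<or> l = uu \<or> l = vv \<or> (pp = 0 \<and> l = uu + vv)" unfolding VV_def by (auto split: if_splits)
    moreover have inj: "m = m' \<and> n = n'" if "l = of_int m' * uu + of_int n' * vv" for m' n' :: int
    proof -
      have e: "of_int m * uu + of_int n * vv = of_int m' * uu + of_int n' * vv" using that l by simp
      from arg_cong[OF e, of Im] have "of_int n * hh = of_int n' * hh" by simp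
      then have nn: "n = n'" using hh_pos by simp
      from arg_cong[OF e, of Re] nn have "of_int m * a = of_int m' * a" by simp
      then have "m = m'" using a0 by simp
      then show ?thesis using nn by simp
    qed
    ultimately have "(m,n) = (0,0) \<or> (m,n) = (1,0) \<or> (m,n) = (0,1) \<or> (pp = 0 \<and> (m,n) = (1,1))"
    proof (elim disjE conjE)
      assume "l = 0" then show ?thesis using inj[of 0 0] by simp
    next
      assume "l = uu" then show ?thesis using inj[of 1 0] by simp
    next
      assume "l = vv" then show ?thesis using inj[of 0 1] by simp
    next
      assume "pp = 0" "l = uu + vv" then show ?thesis using inj[of 1 1] by simp
    qed
    then show "GG m n = 0" unfolding GG_def by auto
  qed
  finally show ?thesis .
qed

lemma VV_sub: "VV \<subseteq> L" unfolding VV_def by auto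

lemma uu_ne0: "uu \<noteq> 0" using a0 by (metis Re_uu zero_complex.sel(1) less_irrefl)
lemma vv_ne0: "vv \<noteq> 0" using hh_pos by (metis Im_vv zero_complex.sel(2) less_irrefl)
lemma uu_ne_vv: "uu \<noteq> vv" using hh_pos by (metis Im_vv Im_uu less_irrefl)
lemma uv_ne0: "uu + vv \<noteq> 0" using hh_pos by (metis Im_vv Im_uu plus_complex.sel(2) zero_complex.sel(2) add_0 less_irrefl)

lemma card_VV: "card VV = (if pp = 0 then 4 else 3)"
  unfolding VV_def using uu_ne0 vv_ne0 uu_ne_vv uv_ne0
  by (auto simp: add.commute[of uu vv])

lemma G1: assumes "x \<ge> 0" "y \<ge> 0" "x + y \<le> 1"
  defines "D \<equiv> of_real x * uu + of_real y * vv"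
  shows "\<exists>c\<in>{0, uu, vv}. (cmod (D - c))^2 \<le> RR^2 - (cmod (D - Oc))^2"
proof (rule ccontr)
  assume "\<not> ?thesis"
  then have h0: "(cmod D)^2 > RR^2 - (cmod (D - Oc))^2"
     and h1: "(cmod (D - uu))^2 > RR^2 - (cmod (D - Oc))^2"
     and h2: "(cmod (D - vv))^2 > RR^2 - (cmod (D - Oc))^2" by auto
  have ReD: "Re D = x*a + y*pp" and ImD: "Im D = y * hh" unfolding D_def by simp_all
  have iden: "(1-x-y) * (cmod D)^2 + x * (cmod (D - uu))^2 + y * (cmod (D - vv))^2
      = RR^2 - (cmod (D - Oc))^2"
  proof -
    have "(1-x-y) * (cmod D)^2 + x * (cmod (D - uu))^2 + y * (cmod (D - vv))^2
      = (1-x-y) * ((x*a + y*pp)^2 + (y*hh)^2) + x * ((x*a + y*pp - a)^2 + (y*hh)^2)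
        + y * ((x*a + y*pp - pp)^2 + (y*hh - hh)^2)"
      by (simp add: cmod_power2 ReD ImD)
    also have "\<dots> = a^2 * x + y * (pp^2 + hh^2) - (x*a + y*pp)^2 - (y*hh)^2"
      by (simp add: power2_eq_square algebra_simps)
    also have "\<dots> = a^2 * x + y * (a * pp + 2*hh*kk) - (x*a + y*pp)^2 - (y*hh)^2"
      by (simp only: rel) simp
    also have "\<dots> = a^2/4 + kk^2 - ((x*a + y*pp - a/2)^2 + (y*hh - kk)^2)"
      by (simp add: power2_eq_square algebra_simps)
    also have "\<dots> = RR^2 - (cmod (D - Oc))^2"
      by (simp add: cmod_power2 ReD ImD RR_sq)
    finally show ?thesis .
  qed
  let ?T = "RR^2 - (cmod (D - Oc))^2"
  have "(1-x-y) * (cmod D)^2 \<ge> (1-x-y) * ?T" using h0 assms by (intro mult_left_mono) auto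
  moreover have "x * (cmod (D - uu))^2 \<ge> x * ?T" using h1 assms by (intro mult_left_mono) auto
  moreover have "y * (cmod (D - vv))^2 \<ge> y * ?T" using h2 assms by (intro mult_left_mono) auto
  moreover have "(1-x-y) * (cmod D)^2 > (1-x-y) * ?T \<or> x * (cmod (D - uu))^2 > x * ?T \<or> y * (cmod (D - vv))^2 > y * ?T"
  proof (cases "x > 0")
    case True then show ?thesis using h1 by simp
  next
    case False
    then show ?thesis
    proof (cases "y > 0")
      case True then show ?thesis using h2 by simp
    next
      case False
      then have "1 - x - y > 0" using \<open>\<not> x > 0\<close> assms by simp
      then show ?thesis using h0 by simp
    qed
  qed
  ultimately have "(1-x-y) * (cmod D)^2 + x * (cmod (D - uu))^2 + y * (cmod (D - vv))^2 > (1-x-y) * ?T + x * ?T + y * ?T"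
    by linarith
  moreover have "(1-x-y) * ?T + x * ?T + y * ?T = ?T" by (simp add: algebra_simps)
  ultimately show False using iden by linarith
qed

lemma Od_eq: "Od = uu + vv - Oc" by (simp add: Od_def)

lemma G: "\<exists>l\<in>L. \<exists>c\<in>{Oc, Od}. \<exists>l0\<in>L. (cmod (D - l))^2 \<le> RR^2 - (cmod (D - l0 - c))^2"
proof -
  define \<eta> where "\<eta> = Im D / hh"
  define \<xi> where "\<xi> = (Re D - \<eta> * pp) / a"
  have D: "D = of_real \<xi> * uu + of_real \<eta> * vv"
    using hh_pos a0 by (simp add: complex_eq_iff \<xi>_def \<eta>_def)
  define m where "m = \<lfloor>\<xi>\<rfloor>"
  define n where "n = \<lfloor>\<eta>\<rfloor>"
  define x where "x = \<xi> - m"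
  define y where "y = \<eta> - n"
  have x01: "0 \<le> x" "x < 1" unfolding x_def m_def by linarith+
  have y01: "0 \<le> y" "y < 1" unfolding y_def n_def by linarith+
  define l1 where "l1 = of_int m * uu + of_int n * vv"
  have l1L: "l1 \<in> L" unfolding l1_def L_iff by blast
  have Dl1: "D - l1 = of_real x * uu + of_real y * vv"
    unfolding D l1_def x_def y_def by (simp add: algebra_simps)
  show ?thesis
  proof (cases "x + y \<le> 1")
    case True
    have "\<exists>c\<in>{0, uu, vv}. (cmod (D - l1 - c))^2 \<le> RR^2 - (cmod (D - l1 - Oc))^2"
      using G1[of x y] True x01 y01 unfolding Dl1 by simp
    then obtain c where c: "c \<in> {0, uu, vv}" "(cmod (D - l1 - c))^2 \<le> RR^2 - (cmod (D - l1 - Oc))^2"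
      by blast
    have "l1 + c \<in> L" using c l1L by auto
    moreover have "(cmod (D - (l1 + c)))^2 \<le> RR^2 - (cmod (D - l1 - Oc))^2" using c by (simp add: algebra_simps)
    ultimately show ?thesis using l1L by blast
  next
    case False
    have "\<exists>c\<in>{0, uu, vv}. (cmod (of_real (1-x) * uu + of_real (1-y) * vv - c))^2
        \<le> RR^2 - (cmod (of_real (1-x) * uu + of_real (1-y) * vv - Oc))^2"
      using G1[of "1-x" "1-y"] False x01 y01 by simp
    then obtain c where c: "c \<in> {0, uu, vv}" "(cmod (of_real (1-x) * uu + of_real (1-y) * vv - c))^2
        \<le> RR^2 - (cmod (of_real (1-x) * uu + of_real (1-y) * vv - Oc))^2"
      by blast
    have e1: "of_real (1-x) * uu + of_real (1-y) * vv - c = - (D - (l1 + uu + vv - c))"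
      using Dl1 by (simp add: algebra_simps)
    have e2: "of_real (1-x) * uu + of_real (1-y) * vv - Oc = - (D - l1 - Od)"
      using Dl1 by (simp add: Od_eq algebra_simps)
    have "l1 + uu + vv - c \<in> L" using c l1L L_add L_uu L_vv by (auto intro!: L_add)
    moreover have "(cmod (D - (l1 + uu + vv - c)))^2 \<le> RR^2 - (cmod (D - l1 - Od))^2"
      using c(2) unfolding e1 e2 norm_minus_cancel .
    ultimately show ?thesis using l1L by blast
  qed
qed

lemma Od_Oc_zero: "pp = 0 \<Longrightarrow> Od = Oc"
proof -
  assume p: "pp = 0"
  then have "hh^2 = b^2" using bsq by simp
  then have hb: "hh = b" using hh_pos b0 by (simp add: power2_eq_iff_nonneg)
  have "kk = b/2" using p hb b0 by (simp add: kk_def power2_eq_square)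
  then show ?thesis using p hb by (simp add: Od_def complex_eq_iff)
qed

lemma Od_Oc_ne: "pp > 0 \<Longrightarrow> Oc - Od \<notin> L"
proof
  assume p: "pp > 0" and "Oc - Od \<in> L"
  then have "Od - Oc \<in> L" using L_uminus by force
  then obtain m n :: int where e: "Od - Oc = of_int m * uu + of_int n * vv" using L_iff by blast
  have "Im (Od - Oc) = hh - 2*kk" by (simp add: Od_def)
  then have i: "hh - 2*kk = of_int n * hh" using e by simp
  have "Re (Od - Oc) = pp" by (simp add: Od_def)
  then have r: "pp = of_int m * a + of_int n * pp" using e by simp
  define j where "j = 1 - n"
  have "2*kk = of_int j * hh" using i by (simp add: j_def algebra_simps)
  then have "2*hh*kk = of_int j * hh^2" by (simp add: power2_eq_square algebra_simps)
  then have jr: "of_int j * hh^2 = pp^2 + hh^2 - a*pp" using rel by simp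
  have "pp^2 < a * pp" using p pp_le a0 by (simp add: power2_eq_square)
  then have "of_int j * hh^2 < 1 * hh^2" using jr by simp
  then have "of_int j < (1::real)" using hh_pos by (simp add: mult_less_cancel_right)
  then have j1: "j \<le> 0" by linarith
  have "a * pp \<le> a * (a/2)" using pp_le a0 by (intro mult_left_mono) auto
  moreover have "a * a \<le> b * b" using a0 cond2 by (intro mult_mono) auto
  moreover have "b * b > 0" using b0 by simp
  ultimately have "pp^2 + hh^2 - a*pp > 0" using bsq unfolding power2_eq_square by linarith
  then have "of_int j * hh^2 > 0" using jr by simp
  then have "of_int j > (0::real)" using hh_pos by (simp add: zero_less_mult_iff)
  then show False using j1 by simp
qed

end

lemma collinear3:
  fixes A B C :: complex
  assumes nA: "cmod A = t0" and t0: "t0 > 0" and nB: "cmod B = t1 - t0" and nC: "cmod C = d - t1"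
    and t01: "t0 \<le> t1" and t1d: "t1 \<le> d" and big: "cmod (A + B + C) \<ge> d"
  shows "A + B + C = of_real (d/t0) * A" and "A + B = of_real (t1/t0) * A"
proof -
  have i1: "cmod (A + B) \<le> cmod A + cmod B" by (rule norm_triangle_ineq)
  have i2: "cmod (A + B + C) \<le> cmod (A + B) + cmod C" by (rule norm_triangle_ineq)
  have e1: "cmod (A + B) = cmod A + cmod B" using i1 i2 big nA nB nC by linarith
  have e2: "cmod ((A + B) + C) = cmod (A + B) + cmod C" using i1 i2 big nA nB nC by linarith
  have AB: "cmod (A + B) = t1" using e1 nA nB by simp
  have t1p: "t1 > 0" using t0 t01 by simp
  from e1 have "cmod A *\<^sub>R B = cmod B *\<^sub>R A" by (simp only: norm_triangle_eq)
  then have "of_real t0 * B = of_real (t1 - t0) * A" using nA nB by (simp add: scaleR_conv_of_real)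
  then have Bf: "B = of_real ((t1 - t0)/t0) * A" using t0
    by (simp add: field_simps)
  then show ABf: "A + B = of_real (t1/t0) * A" using t0
    by (simp add: field_simps)
  from e2 have "cmod (A + B) *\<^sub>R C = cmod C *\<^sub>R (A + B)" by (simp only: norm_triangle_eq)
  then have "of_real t1 * C = of_real (d - t1) * (A + B)" using AB nC by (simp add: scaleR_conv_of_real)
  then have Cf: "C = of_real ((d - t1)/t1) * (A + B)" using t1p
    by (simp add: field_simps)
  have "A + B + C = of_real (1 + (d - t1)/t1) * (A + B)" using Cf by (simp add: algebra_simps)
  also have "\<dots> = of_real ((1 + (d - t1)/t1) * (t1/t0)) * A" using ABf by simp
  also have "(1 + (d - t1)/t1) * (t1/t0) = d/t0" using t1p t0 by (simp add: field_simps)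
  finally show "A + B + C = of_real (d/t0) * A" .
qed

context tor begin

lemma unique_lift: assumes "A \<in> TT" "z1 \<in> A" "z2 \<in> A" "cmod (z1 - x0) \<le> t" "cmod (z2 - x0) \<le> t" "2*t < eps"
  shows "z1 = z2"
proof -
  have A: "A = tp z1" using assms TT_of_mem by blast
  have "cmod (z1 - z2) \<le> cmod (z1 - x0) + cmod (z2 - x0)"
    using norm_triangle_ineq4[of "z1 - x0" "z2 - x0"] by simp
  then have "cmod (z1 - z2) < eps" using assms by linarith
  then show ?thesis using coset_sep[of z1 z1 z2] A assms by simp
qed

lemma norm_scal: "cmod (of_real r * w) = \<bar>r\<bar> * cmod w"
  by (simp add: norm_mult)

lemma SEG:
  assumes Q: "Q \<in> TT" and dQ: "tdist (tp x0) Q = d" and d0: "d > 0"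
  defines "S \<equiv> {s \<in> Q. cmod (x0 - s) = d}"
    and "sig \<equiv> \<lambda>s t. if t \<in> {0..d} then tp (x0 + of_real (t/d) * (s - x0)) else {}"
  shows "segments a b \<alpha> (tp x0) Q = sig ` S" and "inj_on sig S"
proof -
  have pt_norm: "cmod (x0 + of_real (t/d) * (s - x0) - x0) = t" if "s \<in> S" "t \<ge> 0" for s t
  proof -
    have "cmod (x0 + of_real (t/d) * (s - x0) - x0) = \<bar>t/d\<bar> * cmod (s - x0)"
      by (simp only: add_diff_cancel_left' norm_scal)
    then show ?thesis using that d0 by (simp add: S_def norm_minus_commute)
  qed
  define t1 where "t1 = min (eps/4) (d/2)"
  have t1: "0 < t1" "t1 < d" "2*t1 < eps" using eps_pos d0 unfolding t1_def by auto
  show "inj_on sig S"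
  proof (rule inj_onI)
    fix s1 s2 assume s: "s1 \<in> S" "s2 \<in> S" "sig s1 = sig s2"
    let ?z1 = "x0 + of_real (t1/d) * (s1 - x0)" and ?z2 = "x0 + of_real (t1/d) * (s2 - x0)"
    have "tp ?z1 = tp ?z2" using fun_cong[OF s(3), of t1] t1 by (simp add: sig_def)
    then have "?z2 \<in> tp ?z1" using tp_self by metis
    then have "?z1 = ?z2"
      using unique_lift[of "tp ?z1" ?z1 ?z2 x0 t1] pt_norm[OF s(1)] pt_norm[OF s(2)] t1 by simp
    then show "s1 = s2" using t1 d0 by simp
  qed
  show "segments a b \<alpha> (tp x0) Q = sig ` S"
  proof (intro set_eqI iffI)
    fix \<gamma> assume "\<gamma> \<in> sig ` S"
    then obtain s where s: "s \<in> S" "\<gamma> = sig s" by blast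
    have sQ: "s \<in> Q" and sd: "cmod (x0 - s) = d" using s S_def by auto
    have Qs: "Q = tp s" using Q sQ TT_of_mem by blast
    define pt where "pt t = x0 + of_real (t/d) * (s - x0)" for t
    have g: "\<gamma> t = (if t \<in> {0..d} then tp (pt t) else {})" for t using s by (simp add: sig_def pt_def)
    have ptd: "pt d = s" using d0 by (simp add: pt_def)
    have dist_pt: "cmod (pt t - pt t') = \<bar>t - t'\<bar>" for t t'
    proof -
      have "pt t - pt t' = of_real ((t - t')/d) * (s - x0)" by (simp add: pt_def algebra_simps diff_divide_distrib)
      then have "cmod (pt t - pt t') = \<bar>(t - t')/d\<bar> * cmod (s - x0)" by (simp only: norm_scal)
      then show ?thesis using sd d0 by (simp add: norm_minus_commute abs_divide)
    qed
    have iso: "tdist (\<gamma> s') (\<gamma> t') = \<bar>s' - t'\<bar>" if "s' \<in> {0..d}" "t' \<in> {0..d}" "s' \<le> t'" for s' t'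
    proof -
      have up: "tdist (\<gamma> s') (\<gamma> t') \<le> \<bar>s' - t'\<bar>"
        using tdist_lower[of "pt s'" "\<gamma> s'" "pt t'" "\<gamma> t'"] that g dist_pt tp_self by simp
      have "d \<le> tdist (tp x0) (\<gamma> s') + tdist (\<gamma> s') Q"
        using tdist_tri[of "tp x0" "\<gamma> s'" Q] dQ Q g that by simp
      also have "\<dots> \<le> tdist (tp x0) (\<gamma> s') + (tdist (\<gamma> s') (\<gamma> t') + tdist (\<gamma> t') Q)"
        using tdist_tri[of "\<gamma> s'" "\<gamma> t'" Q] Q g that by simp
      finally have tri: "d \<le> tdist (tp x0) (\<gamma> s') + tdist (\<gamma> s') (\<gamma> t') + tdist (\<gamma> t') Q" by simp
      have "tdist (tp x0) (\<gamma> s') \<le> cmod (pt 0 - pt s')"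
        using tdist_lower[of "pt 0" "tp x0" "pt s'" "\<gamma> s'"] g that by (simp add: pt_def)
      then have h1: "tdist (tp x0) (\<gamma> s') \<le> s'" using dist_pt[of 0 s'] that by simp
      have "tdist (\<gamma> t') Q \<le> cmod (pt t' - pt d)"
        using tdist_lower[of "pt t'" "\<gamma> t'" "pt d" Q] g that ptd sQ by simp
      then have h2: "tdist (\<gamma> t') Q \<le> d - t'" using dist_pt[of t' d] that by simp
      show ?thesis using up tri h1 h2 that by simp
    qed
    show "\<gamma> \<in> segments a b \<alpha> (tp x0) Q"
      unfolding segments_def dQ
    proof (intro CollectI conjI ballI allI impI)
      show "\<gamma> 0 = tp x0" using g d0 by (simp add: pt_def)
      show "\<gamma> d = Q" using g d0 ptd Qs by simp
      show "\<gamma> t \<in> TT" if "t \<in> {0..d}" for t using g that by simp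
      show "\<gamma> t = {}" if "t \<notin> {0..d}" for t by (simp only: g[of t] that if_False)
      show "tdist (\<gamma> s') (\<gamma> t') = \<bar>s' - t'\<bar>" if "s' \<in> {0..d}" "t' \<in> {0..d}" for s' t'
      proof (cases "s' \<le> t'")
        case True then show ?thesis using iso that by simp
      next
        case False then show ?thesis using iso[of t' s'] that tdist_sym by (simp add: abs_minus_commute)
      qed
    qed
  next
    fix \<gamma> assume "\<gamma> \<in> segments a b \<alpha> (tp x0) Q"
    then have g0: "\<gamma> 0 = tp x0" and gd: "\<gamma> d = Q" and gT: "\<And>t. t \<in> {0..d} \<Longrightarrow> \<gamma> t \<in> TT"
      and giso: "\<And>s t. s \<in> {0..d} \<Longrightarrow> t \<in> {0..d} \<Longrightarrow> tdist (\<gamma> s) (\<gamma> t) = \<bar>s - t\<bar>"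
      and gout: "\<And>t. t \<notin> {0..d} \<Longrightarrow> \<gamma> t = {}"
      unfolding segments_def dQ by auto
    have K: "x0 + of_real (d/t0) * (z - x0) \<in> S \<and>
        (\<forall>t'\<in>{t0..d}. \<gamma> t' = tp (x0 + of_real (t'/d) * ((x0 + of_real (d/t0) * (z - x0)) - x0)))"
      if t0: "0 < t0" "t0 \<le> d" and z: "z \<in> \<gamma> t0" "cmod (z - x0) = t0" for t0 z
    proof -
      define s where "s = x0 + of_real (d/t0) * (z - x0)"
      have main: "s \<in> Q \<and> \<gamma> t' = tp (x0 + of_real (t'/d) * (s - x0))" if t': "t0 \<le> t'" "t' \<le> d" for t'
      proof -
        have "t0 \<in> {0..d}" "t' \<in> {0..d}" using t0 t' by auto
        then obtain w where w: "w \<in> \<gamma> t'" "cmod (z - w) = tdist (\<gamma> t0) (\<gamma> t')"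
          using tdist_attain[of "\<gamma> t0" "\<gamma> t'" z] gT z by blast
        have wd: "cmod (w - z) = t' - t0" using w giso[of t0 t'] \<open>t0 \<in> {0..d}\<close> \<open>t' \<in> {0..d}\<close> t'
          by (simp add: norm_minus_commute)
        obtain s'' where s'': "s'' \<in> Q" "cmod (w - s'') = tdist (\<gamma> t') Q"
          using tdist_attain[of "\<gamma> t'" Q w] gT Q w \<open>t' \<in> {0..d}\<close> by blast
        have sd: "cmod (s'' - w) = d - t'" using s'' giso[of t' d] \<open>t' \<in> {0..d}\<close> t' gd d0
          by (simp add: norm_minus_commute)
        have big: "cmod (s'' - x0) \<ge> d" using tdist_lower[of x0 "tp x0" s'' Q] s''(1) dQ
          by (simp add: norm_minus_commute)
        have c1: "(z - x0) + (w - z) + (s'' - w) = of_real (d/t0) * (z - x0)"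
          and c2: "(z - x0) + (w - z) = of_real (t'/t0) * (z - x0)"
        proof -
          have "(z - x0) + (w - z) + (s'' - w) = s'' - x0" by simp
          then have big': "cmod ((z - x0) + (w - z) + (s'' - w)) \<ge> d" using big by simp
          show "(z - x0) + (w - z) + (s'' - w) = of_real (d/t0) * (z - x0)"
            by (rule collinear3(1)[OF z(2) t0(1) wd sd t'(1) t'(2) big'])
          show "(z - x0) + (w - z) = of_real (t'/t0) * (z - x0)"
            by (rule collinear3(2)[OF z(2) t0(1) wd sd t'(1) t'(2) big'])
        qed
        have ss: "s'' = s" using c1 by (simp add: s_def algebra_simps)
        have "w = x0 + of_real (t'/d) * (s - x0)"
          using c2 d0 t0 by (simp add: s_def algebra_simps)
        then have "\<gamma> t' = tp (x0 + of_real (t'/d) * (s - x0))"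
          using TT_of_mem[of "\<gamma> t'" w] gT \<open>t' \<in> {0..d}\<close> w by simp
        then show ?thesis using ss s'' by simp
      qed
      have "s \<in> Q" using main[of d] t0 by simp
      moreover have "cmod (x0 - s) = d"
      proof -
        have "cmod (x0 - s) = cmod (of_real (d/t0) * (z - x0))" unfolding s_def
          by (metis add_diff_cancel_left' norm_minus_commute)
        also have "\<dots> = \<bar>d/t0\<bar> * t0" using z by (simp only: norm_scal)
        finally show ?thesis using t0 d0 by simp
      qed
      ultimately have "s \<in> S" by (simp add: S_def)
      then show ?thesis using main unfolding s_def[symmetric] by auto
    qed
    have t1in: "t1 \<in> {0..d}" using t1 by simp
    obtain z1 where z1: "z1 \<in> \<gamma> t1" "cmod (x0 - z1) = tdist (\<gamma> 0) (\<gamma> t1)"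
      using tdist_attain[of "\<gamma> 0" "\<gamma> t1" x0] gT t1in g0 d0 by auto
    have z1n: "cmod (z1 - x0) = t1" using z1 giso[of 0 t1] t1in d0 t1 by (simp add: norm_minus_commute)
    define s where "s = x0 + of_real (d/t1) * (z1 - x0)"
    have sS: "s \<in> S" and hi: "\<And>t'. t' \<in> {t1..d} \<Longrightarrow> \<gamma> t' = tp (x0 + of_real (t'/d) * (s - x0))"
      using K[OF t1(1) _ z1(1) z1n] t1 unfolding s_def by auto
    have "\<gamma> t = sig s t" for t
    proof (cases "t \<in> {0..d}")
      case False then show ?thesis using gout[OF False] unfolding sig_def by (simp only: False if_False)
    next
      case tin: True
      show ?thesis
      proof (cases "t \<ge> t1")
        case True then show ?thesis using hi[of t] tin by (simp add: sig_def)
      next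
        case False
        show ?thesis
        proof (cases "t = 0")
          case True then show ?thesis using g0 d0 by (simp add: sig_def)
        next
          case tn0: False
          then have tpos: "t > 0" using tin by simp
          obtain zt where zt: "zt \<in> \<gamma> t" "cmod (x0 - zt) = tdist (\<gamma> 0) (\<gamma> t)"
            using tdist_attain[of "\<gamma> 0" "\<gamma> t" x0] gT tin g0 d0 by auto
          have ztn: "cmod (zt - x0) = t" using zt giso[of 0 t] tin d0 tpos by (simp add: norm_minus_commute)
          define st where "st = x0 + of_real (d/t) * (zt - x0)"
          have stS: "st \<in> S" and hit: "\<And>t'. t' \<in> {t..d} \<Longrightarrow> \<gamma> t' = tp (x0 + of_real (t'/d) * (st - x0))"
            using K[OF tpos _ zt(1) ztn] tin unfolding st_def by auto
          have e1: "\<gamma> t1 = tp (x0 + of_real (t1/d) * (st - x0))" using hit[of t1] False t1 by simp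
          have e2: "\<gamma> t1 = tp (x0 + of_real (t1/d) * (s - x0))" using hi[of t1] t1 by simp
          have m1: "x0 + of_real (t1/d) * (st - x0) \<in> \<gamma> t1" using e1 tp_self by simp
          have m2: "x0 + of_real (t1/d) * (s - x0) \<in> \<gamma> t1" using e2 tp_self by simp
          have "x0 + of_real (t1/d) * (st - x0) = x0 + of_real (t1/d) * (s - x0)"
            by (rule unique_lift[OF gT[OF t1in] m1 m2 order_eq_refl[OF pt_norm[OF stS less_imp_le[OF t1(1)]]]
                  order_eq_refl[OF pt_norm[OF sS less_imp_le[OF t1(1)]]] t1(3)])
          then have "st = s" using t1 d0 by simp
          then show ?thesis using hit[of t] tin by (simp add: sig_def)
        qed
      qed
    qed
    then have "\<gamma> = sig s" by auto
    then show "\<gamma> \<in> sig ` S" using sS by blast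
  qed
qed

end

context tor begin

lemma tdist_le_RR: assumes "Q \<in> TT"
  shows "tdist (tp x0) Q \<le> RR" and "tdist (tp x0) Q = RR \<Longrightarrow> Q = tp (x0 + Oc) \<or> Q = tp (x0 + Od)"
proof -
  obtain y where Qy: "Q = tp y" using assms TT_iff by blast
  obtain l c l0 where l: "l \<in> L" "c \<in> {Oc, Od}" "l0 \<in> L"
    and ineq: "(cmod ((y - x0) - l))^2 \<le> RR^2 - (cmod ((y - x0) - l0 - c))^2"
    using G[of "y - x0"] by blast
  have "y - l \<in> Q" using Qy tp_mem l L_uminus by simp
  then have "tdist (tp x0) Q \<le> cmod (x0 - (y - l))" using tdist_lower tp_self by blast
  also have "cmod (x0 - (y - l)) = cmod ((y - x0) - l)" by (simp add: norm_minus_commute algebra_simps)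
  finally have tle: "tdist (tp x0) Q \<le> cmod ((y - x0) - l)" .
  have tnn: "tdist (tp x0) Q \<ge> 0" using tdist_nonneg assms by simp
  then have sq: "(tdist (tp x0) Q)^2 \<le> (cmod ((y - x0) - l))^2" using tle by (intro power_mono) auto
  then have "(tdist (tp x0) Q)^2 \<le> RR^2" using ineq by (smt (verit) zero_le_power2)
  then show "tdist (tp x0) Q \<le> RR" using RR_pos power2_le_imp_le by (metis less_imp_le)
  assume "tdist (tp x0) Q = RR"
  then have "RR^2 \<le> (cmod ((y - x0) - l))^2" using sq by simp
  then have "(cmod ((y - x0) - l0 - c))^2 \<le> 0" using ineq by linarith
  then have "(y - x0) - l0 - c = 0" by simp
  then have "y - (x0 + c) \<in> L" using l by (simp add: algebra_simps)
  then have "Q = tp (x0 + c)" using Qy tp_eq by simp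
  then show "Q = tp (x0 + Oc) \<or> Q = tp (x0 + Od)" using l by auto
qed

lemma tdist_Oc: "tdist (tp x0) (tp (x0 + Oc)) = RR"
proof -
  obtain w where w: "w \<in> tp (x0 + Oc)" "cmod (x0 - w) = tdist (tp x0) (tp (x0 + Oc))"
    using tdist_attain[of "tp x0" "tp (x0 + Oc)" x0] by auto
  have "- (w - (x0 + Oc)) \<in> L" using w tp_mem L_uminus by blast
  then have "cmod (Oc - (- (w - (x0 + Oc)))) \<ge> RR" by (rule Oc_ge)
  then have "cmod (x0 - w) \<ge> RR" by (simp add: norm_minus_commute algebra_simps)
  then show ?thesis using w tdist_le_RR(1)[of "tp (x0 + Oc)" x0] by simp
qed

lemma tdist_Od: "tdist (tp x0) (tp (x0 + Od)) = RR"
proof -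
  obtain w where w: "w \<in> tp (x0 + Od)" "cmod (x0 - w) = tdist (tp x0) (tp (x0 + Od))"
    using tdist_attain[of "tp x0" "tp (x0 + Od)" x0] by auto
  have "uu + vv + (w - (x0 + Od)) \<in> L" using w tp_mem by (auto intro!: L_add)
  then have "cmod (Oc - (uu + vv + (w - (x0 + Od)))) \<ge> RR" by (rule Oc_ge)
  then have "cmod (x0 - w) \<ge> RR" by (simp add: Od_def norm_minus_commute algebra_simps)
  then show ?thesis using w tdist_le_RR(1)[of "tp (x0 + Od)" x0] by simp
qed

lemma farthest_eq: "farthest a b \<alpha> (tp x0) = {tp (x0 + Oc), tp (x0 + Od)}"
proof (intro set_eqI iffI)
  fix Q assume "Q \<in> farthest a b \<alpha> (tp x0)"
  then have Q: "Q \<in> TT" "\<forall>X\<in>TT. tdist (tp x0) X \<le> tdist (tp x0) Q" unfolding farthest_def by auto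
  then have "RR \<le> tdist (tp x0) Q" using tdist_Oc[of x0] by (metis TT_tp)
  moreover have "tdist (tp x0) Q \<le> RR" using tdist_le_RR(1) Q(1) by blast
  ultimately have "tdist (tp x0) Q = RR" by linarith
  then show "Q \<in> {tp (x0 + Oc), tp (x0 + Od)}" using tdist_le_RR(2)[OF Q(1)] by simp
next
  fix Q assume "Q \<in> {tp (x0 + Oc), tp (x0 + Od)}"
  then have "Q \<in> TT" "tdist (tp x0) Q = RR" using tdist_Oc tdist_Od by auto
  then show "Q \<in> farthest a b \<alpha> (tp x0)" unfolding farthest_def using tdist_le_RR(1) by auto
qed

lemma card_seg_Oc: "card (segments a b \<alpha> (tp x0) (tp (x0 + Oc))) = card VV"
proof -
  have S: "{s \<in> tp (x0 + Oc). cmod (x0 - s) = RR} = (\<lambda>l. x0 + Oc - l) ` VV"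
  proof (intro set_eqI iffI)
    fix s assume s: "s \<in> {s \<in> tp (x0 + Oc). cmod (x0 - s) = RR}"
    define l where "l = x0 + Oc - s"
    have "- (s - (x0 + Oc)) \<in> L" using s tp_mem L_uminus by blast
    then have lL: "l \<in> L" by (simp add: l_def algebra_simps)
    have "cmod (Oc - l) = RR" using s by (simp add: l_def norm_minus_commute)
    then have "l \<in> VV" using Oc_eq[OF lL] by simp
    moreover have "s = x0 + Oc - l" by (simp add: l_def)
    ultimately show "s \<in> (\<lambda>l. x0 + Oc - l) ` VV" by blast
  next
    fix s assume "s \<in> (\<lambda>l. x0 + Oc - l) ` VV"
    then obtain l where l: "l \<in> VV" "s = x0 + Oc - l" by blast
    have lL: "l \<in> L" using l VV_sub by blast
    have "s \<in> tp (x0 + Oc)" using l lL tp_mem L_uminus by simp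
    moreover have "cmod (x0 - s) = RR" using Oc_eq[OF lL] l by (simp add: norm_minus_commute)
    ultimately show "s \<in> {s \<in> tp (x0 + Oc). cmod (x0 - s) = RR}" by blast
  qed
  have "card (segments a b \<alpha> (tp x0) (tp (x0 + Oc))) = card {s \<in> tp (x0 + Oc). cmod (x0 - s) = RR}"
    using SEG[of "tp (x0 + Oc)" x0 RR] tdist_Oc RR_pos card_image by simp
  also have "\<dots> = card VV" unfolding S by (rule card_image) (auto simp: inj_on_def)
  finally show ?thesis .
qed

lemma card_seg_Od: "card (segments a b \<alpha> (tp x0) (tp (x0 + Od))) = card VV"
proof -
  have S: "{s \<in> tp (x0 + Od). cmod (x0 - s) = RR} = (\<lambda>l. x0 - Oc + l) ` VV"
  proof (intro set_eqI iffI)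
    fix s assume s: "s \<in> {s \<in> tp (x0 + Od). cmod (x0 - s) = RR}"
    define l where "l = s - x0 + Oc"
    have "(s - (x0 + Od)) + (uu + vv) \<in> L" using s tp_mem by (auto intro!: L_add)
    then have lL: "l \<in> L" by (simp add: l_def Od_def algebra_simps)
    have "cmod (Oc - l) = RR" using s by (simp add: l_def norm_minus_commute algebra_simps)
    then have "l \<in> VV" using Oc_eq[OF lL] by simp
    moreover have "s = x0 - Oc + l" by (simp add: l_def)
    ultimately show "s \<in> (\<lambda>l. x0 - Oc + l) ` VV" by blast
  next
    fix s assume "s \<in> (\<lambda>l. x0 - Oc + l) ` VV"
    then obtain l where l: "l \<in> VV" "s = x0 - Oc + l" by blast
    have lL: "l \<in> L" using l VV_sub by blast
    have "l - (uu + vv) \<in> L" using lL by (auto intro!: L_diff L_add)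
    then have "s \<in> tp (x0 + Od)" using l tp_mem by (simp add: Od_def algebra_simps)
    moreover have "cmod (x0 - s) = RR"
    proof -
      have "x0 - s = Oc - l" using l by simp
      then show ?thesis using Oc_eq[OF lL] l by simp
    qed
    ultimately show "s \<in> {s \<in> tp (x0 + Od). cmod (x0 - s) = RR}" by blast
  qed
  have "card (segments a b \<alpha> (tp x0) (tp (x0 + Od))) = card {s \<in> tp (x0 + Od). cmod (x0 - s) = RR}"
    using SEG[of "tp (x0 + Od)" x0 RR] tdist_Od RR_pos card_image by simp
  also have "\<dots> = card VV" unfolding S by (rule card_image) (auto simp: inj_on_def)
  finally show ?thesis .
qed

lemma main_local:
  assumes "P \<in> TT"
  shows "(\<alpha> = pi / 2 \<longrightarrow> card (farthest a b \<alpha> P) = 1 \<and> card (farthest_n a b \<alpha> 4 P) = 1)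
       \<and> (\<alpha> < pi / 2 \<longrightarrow> card (farthest a b \<alpha> P) = 2 \<and> card (farthest_n a b \<alpha> 3 P) = 2)"
proof -
  obtain x0 where P: "P = tp x0" using assms TT_iff by blast
  have F: "farthest a b \<alpha> P = {tp (x0 + Oc), tp (x0 + Od)}" using farthest_eq P by simp
  have c1: "card (segments a b \<alpha> P (tp (x0 + Oc))) = card VV" using card_seg_Oc P by simp
  have c2: "card (segments a b \<alpha> P (tp (x0 + Od))) = card VV" using card_seg_Od P by simp
  show ?thesis
  proof (intro conjI impI)
    assume A: "\<alpha> = pi/2"
    have "cos \<alpha> = 0" unfolding A by (rule cos_pi_half)
    then have p0: "pp = 0" by (simp add: pp_def)
    then have eq: "Od = Oc" by (rule Od_Oc_zero)
    have F1: "farthest a b \<alpha> P = {tp (x0 + Oc)}" using F eq by simp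
    then show "card (farthest a b \<alpha> P) = 1" by simp
    have "farthest_n a b \<alpha> 4 P = {tp (x0 + Oc)}"
      unfolding farthest_n_def F1 using c1 card_VV p0 by auto
    then show "card (farthest_n a b \<alpha> 4 P) = 1" by simp
  next
    assume "\<alpha> < pi/2"
    then have "cos \<alpha> > 0" using al0 by (intro cos_gt_zero) auto
    then have p0: "pp > 0" using b0 by (simp add: pp_def)
    have ne: "tp (x0 + Oc) \<noteq> tp (x0 + Od)" using Od_Oc_ne[OF p0] tp_eq by simp
    then show "card (farthest a b \<alpha> P) = 2" using F by simp
    have "farthest_n a b \<alpha> 3 P = farthest a b \<alpha> P"
      unfolding farthest_n_def F using c1 c2 card_VV p0 by auto
    then show "card (farthest_n a b \<alpha> 3 P) = 2" using F ne by simp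
  qed
qed

end

theorem mainTheorem2:
  fixes a b \<alpha> :: real and P :: "complex set"
  assumes "a > 0" and "b > 0" and "0 < \<alpha>" and "\<alpha> \<le> pi / 2"
    and "2 * b * cos \<alpha> \<le> a" and "a \<le> b"
    and "P \<in> torus a b \<alpha>"
  shows "(\<alpha> = pi / 2 \<longrightarrow> card (farthest a b \<alpha> P) = 1 \<and> card (farthest_n a b \<alpha> 4 P) = 1)
       \<and> (\<alpha> < pi / 2 \<longrightarrow> card (farthest a b \<alpha> P) = 2 \<and> card (farthest_n a b \<alpha> 3 P) = 2)"
proof -
  interpret tor a b \<alpha> using assms by (unfold_locales) auto
  show ?thesis using main_local assms(7) by blast
qed


end
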